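(* Let $\Sigma,\Gamma$ be finite alphabets, $w \in \Sigma^+$, $h:\Sigma^*\to\Gamma^*$ an injective morphism, and suppose $h(w) = x^r$ with $x \in \Gamma^+$ of minimal length and $r \in \mathbb{Q}$. If $a\in\Sigma$ satisfies $|h(a)| \ge |x|$ and $ava$ and $aua$ are factors of $w$ for some words $u, v \in (\Sigma\setminus\{a\})^*$, then $u = v$.
   Context: For a nonempty word $x$ and rational $r$ with $r|x|$ a nonnegative integer, $x^r$ denotes the prefix of length $r|x|$ of the infinite word $xxx\cdots$. *)

theory Defs
  imports Complex_Main "HOL-Library.Sublist"
begin

definition morphism :: "('a list \<Rightarrow> 'b list) \<Rightarrow> bool" where
  "morphism h \<longleftrightarrow> (\<forall>u v. h (u @ v) = h u @ h v)"

definition inf_pow_prefix :: "'b list \<Rightarrow> nat \<Rightarrow> 'b list" where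
  "inf_pow_prefix x n = map (\<lambda>i. x ! (i mod length x)) [0..<n]"

text \<open>Fractional power x^r: defined when x nonempty and r*|x| is a nonnegative integer.\<close>
definition frac_pow :: "'b list \<Rightarrow> rat \<Rightarrow> 'b list" where
  "frac_pow x r = inf_pow_prefix x (nat \<lfloor>r * of_nat (length x)\<rfloor>)"

definition is_frac_pow_of :: "'b list \<Rightarrow> 'b list \<Rightarrow> rat \<Rightarrow> bool" where
  "is_frac_pow_of y x r \<longleftrightarrow> x \<noteq> [] \<and> r * of_nat (length x) \<in> \<nat> \<and> y = frac_pow x r"

end

theory Submission
  imports Defs
begin

lemma period_mod:
  assumes per: "\<forall>k. k + q < length y \<longrightarrow> y!k = y!(k+q)" and q: "0 < q"
  shows "k < length y \<Longrightarrow> y!k = y!(k mod q)"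
proof (induction k rule: less_induct)
  case (less k)
  show ?case
  proof (cases "k < q")
    case True then show ?thesis by simp
  next
    case False
    then have k: "k = (k - q) + q" by simp
    have "y!(k-q) = y!k" using per less.prems k by (metis)
    moreover have "y!(k-q) = y!((k-q) mod q)" using less q False by auto
    moreover have "(k-q) mod q = k mod q" using False by (metis k mod_add_self2)
    ultimately show ?thesis by simp
  qed
qed

lemma frac_nth:
  assumes "is_frac_pow_of y x r"
  shows "x \<noteq> [] \<and> (\<forall>k<length y. y!k = x!(k mod length x))"
  using assms unfolding is_frac_pow_of_def frac_pow_def inf_pow_prefix_def
  by auto

lemma minimal_period:
  assumes min: "\<forall>x' r'. is_frac_pow_of y x' r' \<longrightarrow> length x \<le> length x'"
    and q: "0 < q" "q \<le> length y"
    and per: "\<forall>k. k + q < length y \<longrightarrow> y!k = y!(k+q)"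
  shows "length x \<le> q"
proof -
  let ?n = "length y"
  let ?x = "take q y"
  let ?r = "(of_nat ?n / of_nat q) :: rat"
  have lx: "length ?x = q" using q by simp
  have rr: "?r * of_nat (length ?x) = of_nat ?n" using q lx by simp
  have "y = inf_pow_prefix ?x ?n"
    unfolding inf_pow_prefix_def
  proof (rule nth_equalityI)
    show "length y = length (map (\<lambda>i. ?x ! (i mod length ?x)) [0..<?n])" by simp
    fix k assume k: "k < length y"
    have "y!k = y!(k mod q)" using period_mod[OF per q(1) k] .
    also have "\<dots> = ?x ! (k mod q)" using q by simp
    finally show "y!k = map (\<lambda>i. ?x ! (i mod length ?x)) [0..<?n] ! k" using k lx by simp
  qed
  then have "is_frac_pow_of y ?x ?r"
    unfolding is_frac_pow_of_def frac_pow_def using rr q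
    by (auto simp add: of_nat_in_Nats)
  then show ?thesis using min lx by fastforce
qed


lemma shift_mod:
  fixes y x :: "'b list"
  assumes xd: "\<forall>k<length y. y!k = x!(k mod length x)" and p: "0 < length x"
    and min: "\<forall>q. 0 < q \<longrightarrow> q \<le> length y \<longrightarrow> (\<forall>k. k + q < length y \<longrightarrow> y!k = y!(k+q)) \<longrightarrow> length x \<le> q"
    and pn: "length x \<le> length y"
    and eq: "\<forall>t<L. y!(i+t) = y!(j+t)" and iL: "i + L \<le> length y" and jL: "j + L \<le> length y"
    and pL: "length x \<le> L" and ij: "i \<le> j"
  shows "i mod length x = j mod length x"
proof (rule ccontr)
  assume ne: "i mod length x \<noteq> j mod length x"
  define p where "p = length x"
  define D where "D = j - i"
  define d where "d = D mod p"
  have jD: "j = i + D" using ij D_def by simp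
  have d0: "d \<noteq> 0" proof
    assume "d = 0"
    then have "(i + D) mod p = i mod p" unfolding d_def using mod_add_right_eq[of i D p] by simp
    then show False using ne jD p_def by simp
  qed
  have dp: "d < p" using p unfolding d_def p_def by simp
  have xs: "x!s = x!((s + D) mod p)" if s: "s < p" for s
  proof -
    define t where "t = (s + p - i mod p) mod p"
    have tp: "t < p" using p unfolding t_def p_def by simp
    have it: "(i + t) mod p = s"
    proof -
      have "(i + t) mod p = (i + (s + p - i mod p)) mod p" unfolding t_def
        by (rule mod_add_right_eq)
      also have "\<dots> = (i mod p + (s + p - i mod p)) mod p"
        by (rule mod_add_left_eq[symmetric])
      also have "i mod p + (s + p - i mod p) = s + p" using mod_less_divisor[of p i] p p_def by linarith
      finally show ?thesis using s by simp
    qed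
    have jt: "(j + t) mod p = (s + D) mod p"
    proof -
      have "(j + t) mod p = ((i + t) + D) mod p" using jD by (simp add: algebra_simps)
      also have "\<dots> = ((i + t) mod p + D) mod p" by (rule mod_add_left_eq[symmetric])
      finally show ?thesis using it by simp
    qed
    have "y!(i+t) = y!(j+t)" using eq tp pL p_def by simp
    moreover have "y!(i+t) = x!((i+t) mod p)" using xd iL tp pL p_def by simp
    moreover have "y!(j+t) = x!((j+t) mod p)" using xd jL tp pL p_def by simp
    ultimately show ?thesis using it jt by simp
  qed
  have "\<forall>k. k + d < length y \<longrightarrow> y!k = y!(k+d)"
  proof (intro allI impI)
    fix k assume k: "k + d < length y"
    have "y!k = x!(k mod p)" using xd k p_def by simp
    also have "\<dots> = x!((k mod p + D) mod p)" by (rule xs) (use p p_def in simp)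
    also have "(k mod p + D) mod p = (k + d) mod p" unfolding d_def
      by (simp add: mod_add_left_eq mod_add_right_eq)
    also have "x!((k + d) mod p) = y!(k+d)" using xd k p_def by simp
    finally show "y!k = y!(k+d)" .
  qed
  then have "p \<le> d" using min d0 dp pn p_def by simp
  then show False using dp by simp
qed


lemma mod_sub_mult:
  fixes t m p :: nat
  assumes "m mod p = 0" "m \<le> t"
  shows "(t - m) mod p = t mod p"
proof -
  have "t mod p = ((t - m) + m) mod p" using assms by simp
  also have "\<dots> = ((t - m) + m mod p) mod p" by (rule mod_add_right_eq[symmetric])
  finally show ?thesis using assms by simp
qed

lemma comm_from_nth:
  fixes W1 W2 :: "'b list" and g :: "nat \<Rightarrow> 'b"
  assumes "\<forall>t<length W1. W1!t = g (t mod p)" "\<forall>t<length W2. W2!t = g (t mod p)"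
    and "length W1 mod p = 0" "length W2 mod p = 0"
  shows "W1 @ W2 = W2 @ W1"
proof (rule nth_equalityI)
  show "length (W1 @ W2) = length (W2 @ W1)" by simp
  have all: "(W1 @ W2)!t = g (t mod p)" if "t < length (W1 @ W2)"
    and "\<forall>t<length W1. W1!t = g (t mod p)" "\<forall>t<length W2. W2!t = g (t mod p)"
    and "length W1 mod p = 0" for t and W1 W2 :: "'b list"
    using that mod_sub_mult[of "length W1" p t] by (auto simp: nth_append)
  fix t assume "t < length (W1 @ W2)"
  then show "(W1 @ W2)!t = (W2 @ W1)!t"
    using all[of t W1 W2] all[of t W2 W1] assms by simp
qed

lemma hom_app: "morphism h \<Longrightarrow> h (u @ v) = h u @ h v"
  unfolding morphism_def by blast

lemma hom_nil: "morphism h \<Longrightarrow> h [] = []"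
  using hom_app[of h "[]" "[]"] by simp

lemma eq_words:
  assumes "a \<notin> set u" "a \<notin> set v" "v @ a # u = u @ a # v"
  shows "u = v"
proof -
  have "takeWhile (\<lambda>c. c \<noteq> a) (v @ a # u) = v" using assms(1,2) by (induction v) auto
  moreover have "takeWhile (\<lambda>c. c \<noteq> a) (u @ a # v) = u" using assms(1,2) by (induction u) auto
  ultimately show ?thesis using assms by simp
qed

theorem lemma6:
  fixes w :: "'a::finite list" and h :: "'a list \<Rightarrow> 'b::finite list"
    and x :: "'b list" and r :: rat and a :: 'a and u v :: "'a list"
  assumes "w \<noteq> []"
    and "morphism h" and "inj h"
    and "is_frac_pow_of (h w) x r"
    and "\<forall>x' r'. is_frac_pow_of (h w) x' r' \<longrightarrow> length x \<le> length x'"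
    and "length (h [a]) \<ge> length x"
    and "a \<notin> set u" and "a \<notin> set v"
    and "sublist ([a] @ v @ [a]) w" and "sublist ([a] @ u @ [a]) w"
  shows "u = v"
proof -
  define y where "y = h w"
  define p where "p = length x"
  define A where "A = h [a]"
  have hom: "\<And>s t. h (s @ t) = h s @ h t" using hom_app[OF assms(2)] .
  have fr: "x \<noteq> [] \<and> (\<forall>k<length y. y!k = x!(k mod length x))"
    using frac_nth[OF assms(4)] y_def by simp
  then have xd: "\<forall>k<length y. y!k = x!(k mod length x)" and p0: "0 < length x" by auto
  have min: "\<forall>q. 0 < q \<longrightarrow> q \<le> length y \<longrightarrow> (\<forall>k. k + q < length y \<longrightarrow> y!k = y!(k+q)) \<longrightarrow> length x \<le> q"
    using minimal_period[OF assms(5)] y_def by blast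
  have "y \<noteq> []"
  proof
    assume "y = []"
    then have "h w = h []" using hom_nil[OF assms(2)] y_def by simp
    then show False using assms(1,3) by (simp add: inj_eq)
  qed
  then have pn: "length x \<le> length y" using min by auto
  have la: "length x \<le> length A" using assms(6) A_def by simp
  have occ: "\<exists>i. (\<forall>t<length (A @ h z). (A @ h z)!t = x!((i + t) mod p))
     \<and> (length (A @ h z)) mod p = 0 \<and> (\<forall>t<length A. y!(i+t) = A!t) \<and> i + length A \<le> length y"
    if sub: "sublist ([a] @ z @ [a]) w" for z
  proof -
    obtain ps ss where w: "w = ps @ ([a] @ z @ [a]) @ ss" using sub unfolding sublist_def by blast
    have yy: "y = h ps @ A @ h z @ A @ h ss" unfolding y_def A_def w
      by (simp add: hom flip: append_Cons)
    define i where "i = length (h ps)"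
    define m where "m = length (A @ h z)"
    have e1: "\<forall>t<length A. y!(i+t) = A!t" unfolding yy i_def by (simp add: nth_append)
    have e2: "\<forall>t<length A. y!((i+m)+t) = A!t" unfolding yy i_def m_def
      by (simp add: nth_append)
    have l1: "i + length A \<le> length y" unfolding yy i_def by simp
    have l2: "(i + m) + length A \<le> length y" unfolding yy i_def m_def by simp
    have "i mod length x = (i + m) mod length x"
      by (rule shift_mod[OF xd p0 min pn _ l1 l2 la]) (use e1 e2 in auto)
    then have mp: "m mod p = 0" unfolding p_def
      by (metis mod_eq_dvd_iff_nat le_add1 add_diff_cancel_left' dvd_imp_mod_0)
    have "\<forall>t<m. (A @ h z)!t = x!((i + t) mod p)"
    proof (intro allI impI)
      fix t assume t: "t < m"
      have yy2: "y = h ps @ ((A @ h z) @ (A @ h ss))" using yy by simp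
      have "y!(i+t) = ((A @ h z) @ (A @ h ss))!t" unfolding yy2 i_def by (rule nth_append_length_plus)
      also have "\<dots> = (A @ h z)!t" using t unfolding m_def by (rule nth_append_left)
      finally have "(A @ h z)!t = y!(i+t)" by simp
      also have "\<dots> = x!((i + t) mod p)"
      proof -
        have "i + t < length y" using t l2 unfolding m_def by linarith
        then show ?thesis using xd unfolding p_def by blast
      qed
      finally show "(A @ h z)!t = x!((i + t) mod p)" .
    qed
    then have "\<forall>t<length (A @ h z). (A @ h z)!t = x!((i + t) mod p)" unfolding m_def .
    moreover have "length (A @ h z) mod p = 0" using mp unfolding m_def .
    ultimately show ?thesis using e1 l1 by (intro exI[of _ i]) (intro conjI)
  qed
  obtain i1 where o1: "\<forall>t<length (A @ h v). (A @ h v)!t = x!((i1 + t) mod p)"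
     "length (A @ h v) mod p = 0" "\<forall>t<length A. y!(i1+t) = A!t" "i1 + length A \<le> length y"
    using occ[OF assms(9)] by (elim exE conjE) (rule that; assumption)
  obtain i2 where o2: "\<forall>t<length (A @ h u). (A @ h u)!t = x!((i2 + t) mod p)"
     "length (A @ h u) mod p = 0" "\<forall>t<length A. y!(i2+t) = A!t" "i2 + length A \<le> length y"
    using occ[OF assms(10)] by (elim exE conjE) (rule that; assumption)
  have i12: "i1 mod p = i2 mod p"
  proof (cases "i1 \<le> i2")
    case True
    show ?thesis unfolding p_def
      by (rule shift_mod[OF xd p0 min pn _ o1(4) o2(4) la True]) (use o1(3) o2(3) in auto)
  next
    case False
    have "i2 mod length x = i1 mod length x"
      by (rule shift_mod[OF xd p0 min pn _ o2(4) o1(4) la]) (use o1(3) o2(3) False in auto)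
    then show ?thesis unfolding p_def by simp
  qed
  have g1: "\<forall>t<length (A @ h v). (A @ h v)!t = (\<lambda>s. x!((i1 + s) mod p)) (t mod p)"
    using o1(1) by (simp add: mod_add_right_eq)
  have g2: "\<forall>t<length (A @ h u). (A @ h u)!t = (\<lambda>s. x!((i1 + s) mod p)) (t mod p)"
  proof (intro allI impI)
    fix t assume "t < length (A @ h u)"
    then have "(A @ h u)!t = x!((i2 + t) mod p)" using o2(1) by blast
    also have "(i2 + t) mod p = (i2 mod p + t) mod p" by (simp add: mod_add_left_eq)
    also have "\<dots> = (i1 mod p + t) mod p" using i12 by simp
    also have "\<dots> = (i1 + t mod p) mod p" by (simp add: mod_add_left_eq mod_add_right_eq)
    finally show "(A @ h u)!t = (\<lambda>s. x!((i1 + s) mod p)) (t mod p)" by simp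
  qed
  have c: "(A @ h v) @ (A @ h u) = (A @ h u) @ (A @ h v)"
    by (rule comm_from_nth[OF g1 g2 o1(2) o2(2)])
  have "h ((a # v) @ (a # u)) = h ((a # u) @ (a # v))"
  proof -
    have hc: "h (a # s) = h [a] @ h s" for s using hom[of "[a]" s] by (simp only: append_Cons append_Nil)
    have "h ((a # v) @ (a # u)) = (A @ h v) @ (A @ h u)" unfolding A_def hom hc[of v] hc[of u] by simp
    moreover have "h ((a # u) @ (a # v)) = (A @ h u) @ (A @ h v)" unfolding A_def hom hc[of v] hc[of u] by simp
    ultimately show ?thesis using c by simp
  qed
  then have "(a # v) @ (a # u) = (a # u) @ (a # v)" using assms(3) by (simp add: inj_eq)
  then have "v @ a # u = u @ a # v" by simp
  then show ?thesis by (rule eq_words[OF assms(7,8)])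
qed

end
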